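(* Let $G_1$ and $G_2$ be graphs with a common vertex set $V$ (of size $n$), let $\{V_1,\dots,V_m\}$ be a partition of $V$, and suppose there is a unital $C^*$-algebra $\mathcal{A}$ and a quantum permutation matrix $u\in M_n(\mathcal{A})$ with $uA_{G_1}=A_{G_2}u$ that is block diagonal with respect to $\{V_1,\dots,V_m\}$, i.e. $u_{ab}=0$ whenever $a$ and $b$ lie in different parts. Let $\{S_1,\dots,S_{k+1}\}$ be a partition of $\{1,\dots,m\}$ and define the partition $\pi=\{C_1,\dots,C_k,D\}$ of $V$ by $C_i:=\bigcup_{s\in S_i}V_s$ ($1\le i\le k$) and $D:=\bigcup_{s\in S_{k+1}}V_s$. If both $G_1$ and $G_2$ satisfy the Godsil–McKay conditions (i) and (ii) with respect to $\pi$, then the switched graphs $G_1^{\pi,D}$ and $G_2^{\pi,D}$ are quantum isomorphic.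
   Context: A quantum permutation matrix over a unital $C^*$-algebra $\mathcal{A}$ is $u=(u_{ij})\in M_n(\mathcal{A})$ with $u_{ij}=u_{ij}^*=u_{ij}^2$ and $\sum_ku_{ik}=1=\sum_ku_{ki}$ for all $i$. Graphs $G_1,G_2$ on $n$ vertices are quantum isomorphic if there is a unital $C^*$-algebra $\mathcal{A}$ and a quantum permutation matrix $u\in M_n(\mathcal{A})$ with $A_{G_1}u=uA_{G_2}$, where $A_G$ is the adjacency matrix. Godsil–McKay switching: given a graph $G$ and a partition $\pi=\{C_1,\dots,C_k,D\}$ of $V(G)$ with $n_i=|C_i|$, the conditions are (i) for all $1\le i,j\le k$, any two vertices in $C_i$ have the same number of neighbours in $C_j$; (ii) each $v\in D$ has either $0$, $n_i/2$ or $n_i$ neighbours in $C_i$, for each $i$. The graph $G^{\pi,D}$ is obtained by, for each $v\in D$ and each $i$ such that $v$ has exactly $n_i/2$ neighbours in $C_i$, deleting these $n_i/2$ edges and joining $v$ instead to the other $n_i/2$ vertices of $C_i$. *)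

theory Defs
  imports "HOL-Analysis.Analysis"
begin

text \<open>Unital C*-algebras: a complex Banach algebra with unit (norm 1 = 1), an
 involution, and the C*-identity.  The complex scalar action is an extra operation
 extending the real one.\<close>
class cstar_algebra = real_normed_algebra_1 + banach +
  fixes cstar :: "'a \<Rightarrow> 'a"
    and scaleC :: "complex \<Rightarrow> 'a \<Rightarrow> 'a"
  assumes scaleC_of_real: "scaleC (complex_of_real r) x = scaleR r x"
    and scaleC_add_left: "scaleC (a + b) x = scaleC a x + scaleC b x"
    and scaleC_add_right: "scaleC a (x + y) = scaleC a x + scaleC a y"
    and scaleC_scaleC: "scaleC a (scaleC b x) = scaleC (a * b) x"
    and scaleC_mult_left: "scaleC a x * y = scaleC a (x * y)"
    and scaleC_mult_right: "x * scaleC a y = scaleC a (x * y)"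
    and norm_scaleC: "norm (scaleC a x) = cmod a * norm x"
    and cstar_cstar: "cstar (cstar x) = x"
    and cstar_add: "cstar (x + y) = cstar x + cstar y"
    and cstar_mult: "cstar (x * y) = cstar y * cstar x"
    and cstar_scaleC: "cstar (scaleC a x) = scaleC (cnj a) (cstar x)"
    and cstar_identity: "norm (cstar x * x) = (norm x)\<^sup>2"

definition simple_graph :: "('v \<Rightarrow> 'v \<Rightarrow> bool) \<Rightarrow> bool" where
  "simple_graph E \<longleftrightarrow> (\<forall>x y. E x y \<longrightarrow> E y x) \<and> (\<forall>x. \<not> E x x)"

definition adjm :: "('v \<Rightarrow> 'v \<Rightarrow> bool) \<Rightarrow> 'v \<Rightarrow> 'v \<Rightarrow> 'a::cstar_algebra" where
  "adjm E x y = (if E x y then 1 else 0)"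

definition quantum_perm :: "('v::finite \<Rightarrow> 'v \<Rightarrow> 'a::cstar_algebra) \<Rightarrow> bool" where
  "quantum_perm u \<longleftrightarrow>
     (\<forall>i j. u i j = cstar (u i j) \<and> u i j * u i j = u i j) \<and>
     (\<forall>i. (\<Sum>k\<in>UNIV. u i k) = 1) \<and> (\<forall>i. (\<Sum>k\<in>UNIV. u k i) = 1)"

definition intertwines ::
  "('v::finite \<Rightarrow> 'v \<Rightarrow> bool) \<Rightarrow> ('v \<Rightarrow> 'v \<Rightarrow> bool) \<Rightarrow> ('v \<Rightarrow> 'v \<Rightarrow> 'a::cstar_algebra) \<Rightarrow> bool" where
  "intertwines E1 E2 u \<longleftrightarrow>
     (\<forall>a b. (\<Sum>c\<in>UNIV. adjm E1 a c * u c b) = (\<Sum>c\<in>UNIV. u a c * adjm E2 c b))"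

definition quantum_iso_over ::
  "'a::cstar_algebra itself \<Rightarrow> ('v::finite \<Rightarrow> 'v \<Rightarrow> bool) \<Rightarrow> ('v \<Rightarrow> 'v \<Rightarrow> bool) \<Rightarrow> bool" where
  "quantum_iso_over T E1 E2 \<longleftrightarrow>
     (\<exists>u :: 'v \<Rightarrow> 'v \<Rightarrow> 'a. quantum_perm u \<and> intertwines E1 E2 u)"

definition is_partition_idx :: "('i \<Rightarrow> 'x set) \<Rightarrow> 'i set \<Rightarrow> 'x set \<Rightarrow> bool" where
  "is_partition_idx P I X \<longleftrightarrow>
     (\<forall>i\<in>I. P i \<noteq> {}) \<and> (\<forall>i\<in>I. \<forall>j\<in>I. i \<noteq> j \<longrightarrow> P i \<inter> P j = {}) \<and> (\<Union>i\<in>I. P i) = X"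

definition gm_cond ::
  "('v \<Rightarrow> 'v \<Rightarrow> bool) \<Rightarrow> (nat \<Rightarrow> 'v set) \<Rightarrow> nat \<Rightarrow> 'v set \<Rightarrow> bool" where
  "gm_cond E C k D \<longleftrightarrow>
     (\<forall>i\<in>{1..k}. \<forall>j\<in>{1..k}. \<forall>x\<in>C i. \<forall>y\<in>C i.
        card {z\<in>C j. E x z} = card {z\<in>C j. E y z}) \<and>
     (\<forall>v\<in>D. \<forall>i\<in>{1..k}.
        card {z\<in>C i. E v z} = 0 \<or> 2 * card {z\<in>C i. E v z} = card (C i)
        \<or> card {z\<in>C i. E v z} = card (C i))"

definition gm_flip ::
  "('v \<Rightarrow> 'v \<Rightarrow> bool) \<Rightarrow> (nat \<Rightarrow> 'v set) \<Rightarrow> nat \<Rightarrow> 'v set \<Rightarrow> 'v \<Rightarrow> 'v \<Rightarrow> bool" where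
  "gm_flip E C k D v w \<longleftrightarrow>
     v \<in> D \<and> (\<exists>i\<in>{1..k}. w \<in> C i \<and> 2 * card {z\<in>C i. E v z} = card (C i))"

definition gm_switch ::
  "('v \<Rightarrow> 'v \<Rightarrow> bool) \<Rightarrow> (nat \<Rightarrow> 'v set) \<Rightarrow> nat \<Rightarrow> 'v set \<Rightarrow> 'v \<Rightarrow> 'v \<Rightarrow> bool" where
  "gm_switch E C k D x y =
     (if gm_flip E C k D x y \<or> gm_flip E C k D y x then \<not> E x y else E x y)"

end

theory Submission
  imports Defs
begin

definition mm :: "('v::finite \<Rightarrow> 'v \<Rightarrow> 'a::ring_1) \<Rightarrow> ('v \<Rightarrow> 'v \<Rightarrow> 'a) \<Rightarrow> 'v \<Rightarrow> 'v \<Rightarrow> 'a" where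
  "mm X Y = (\<lambda>a b. \<Sum>c\<in>UNIV. X a c * Y c b)"

lemma mm_assoc: "mm (mm X Y) Z = mm X (mm Y Z)"
  unfolding mm_def
  by (intro ext) (simp add: sum_distrib_left sum_distrib_right mult.assoc, rule sum.swap)

definition ofr :: "('v \<Rightarrow> 'v \<Rightarrow> real) \<Rightarrow> 'v \<Rightarrow> 'v \<Rightarrow> 'a::real_algebra_1" where
  "ofr P = (\<lambda>a b. of_real (P a b))"

lemma mm_ofr: "mm (ofr P) (ofr R) = (ofr (mm P R) :: 'v::finite \<Rightarrow> 'v \<Rightarrow> 'a::real_algebra_1)"
  unfolding mm_def ofr_def by (intro ext) (simp add: of_real_sum)

definition Ar :: "('v \<Rightarrow> 'v \<Rightarrow> bool) \<Rightarrow> 'v \<Rightarrow> 'v \<Rightarrow> real" where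
  "Ar E x y = (if E x y then 1 else 0)"

lemma adjm_ofr: "adjm E = ofr (Ar E)"
  unfolding adjm_def ofr_def Ar_def by (intro ext) simp

definition Qm :: "('v \<Rightarrow> nat) \<Rightarrow> nat \<Rightarrow> 'v \<Rightarrow> 'v \<Rightarrow> real" where
  "Qm cl k x y = (if cl x = k+1 then (if x = y then 1 else 0)
     else if cl y = cl x then 2 / real (card {z. cl z = cl x}) - (if x = y then 1 else 0) else 0)"

lemma Qm_sym: "Qm cl k x y = Qm cl k y x"
  unfolding Qm_def by auto

lemma sum_if_cell:
  fixes g :: "'v::finite \<Rightarrow> 'a::comm_monoid_add"
  shows "(\<Sum>c\<in>UNIV. if cl c = j then g c else 0) = (\<Sum>c\<in>{z. cl z = j}. g c)"
proof -
  have "(\<Sum>c\<in>{z. cl z = j}. if cl c = j then g c else 0) = (\<Sum>c\<in>UNIV. if cl c = j then g c else 0)"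
    by (rule sum.mono_neutral_left) auto
  moreover have "(\<Sum>c\<in>{z. cl z = j}. if cl c = j then g c else 0) = (\<Sum>c\<in>{z. cl z = j}. g c)"
    by (rule sum.cong) auto
  ultimately show ?thesis by simp
qed

lemma Qsum_left:
  fixes f :: "'v::finite \<Rightarrow> 'a::real_algebra_1"
  shows "(\<Sum>c\<in>UNIV. of_real (Qm cl k x c) * f c) =
    (if cl x = k+1 then f x else of_real (2 / real (card {z. cl z = cl x})) * (\<Sum>c\<in>{z. cl z = cl x}. f c) - f x)"
proof (cases "cl x = k+1")
  case True
  then have "\<And>c. of_real (Qm cl k x c) * f c = (if x = c then f c else 0)"
    by (simp add: Qm_def)
  then show ?thesis using True by simp
next
  case False
  let ?a = "of_real (2 / real (card {z. cl z = cl x})) :: 'a"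
  have "\<And>c. of_real (Qm cl k x c) * f c = (if c \<in> {z. cl z = cl x} then ?a * f c else 0) - (if x = c then f c else 0)"
    using False by (auto simp: Qm_def algebra_simps)
  then have "(\<Sum>c\<in>UNIV. of_real (Qm cl k x c) * f c) = (\<Sum>c\<in>UNIV. (if c \<in> {z. cl z = cl x} then ?a * f c else 0)) - f x"
    by (simp add: sum_subtractf)
  also have "\<dots> = ?a * (\<Sum>c\<in>{z. cl z = cl x}. f c) - f x"
    by (simp add: sum_if_cell sum_distrib_left)
  finally show ?thesis using False by simp
qed

lemma Qsum_right:
  fixes f :: "'v::finite \<Rightarrow> 'a::real_algebra_1"
  shows "(\<Sum>c\<in>UNIV. f c * of_real (Qm cl k c x)) =
    (if cl x = k+1 then f x else (\<Sum>c\<in>{z. cl z = cl x}. f c) * of_real (2 / real (card {z. cl z = cl x})) - f x)"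
proof (cases "cl x = k+1")
  case True
  then have "\<And>c. f c * of_real (Qm cl k c x) = (if x = c then f c else 0)"
    by (auto simp: Qm_def)
  then show ?thesis using True by simp
next
  case False
  let ?a = "of_real (2 / real (card {z. cl z = cl x})) :: 'a"
  have "\<And>c. f c * of_real (Qm cl k c x) = (if c \<in> {z. cl z = cl x} then f c * ?a else 0) - (if x = c then f c else 0)"
    using False by (auto simp: Qm_def algebra_simps)
  then have "(\<Sum>c\<in>UNIV. f c * of_real (Qm cl k c x)) = (\<Sum>c\<in>UNIV. (if c \<in> {z. cl z = cl x} then f c * ?a else 0)) - f x"
    by (simp add: sum_subtractf)
  also have "\<dots> = (\<Sum>c\<in>{z. cl z = cl x}. f c) * ?a - f x"
    by (simp add: sum_if_cell sum_distrib_right)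
  finally show ?thesis using False by simp
qed

lemma sum_cell:
  fixes g :: "'v::finite \<Rightarrow> 'a::comm_monoid_add"
  assumes "\<And>c. cl c \<noteq> j \<Longrightarrow> g c = 0"
  shows "(\<Sum>c\<in>{z. cl z = j}. g c) = (\<Sum>c\<in>UNIV. g c)"
  by (rule sum.mono_neutral_left) (auto simp: assms)

lemma Q_comm:
  fixes u :: "'v::finite \<Rightarrow> 'v \<Rightarrow> 'a::real_algebra_1"
  assumes rows: "\<And>i. (\<Sum>c\<in>UNIV. u i c) = 1" and cols: "\<And>i. (\<Sum>c\<in>UNIV. u c i) = 1"
    and blk: "\<And>a b. cl a \<noteq> cl b \<Longrightarrow> u a b = 0"
  shows "mm u (ofr (Qm cl k)) = mm (ofr (Qm cl k)) u"
proof (intro ext)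
  fix a b
  have L: "mm u (ofr (Qm cl k)) a b = (if cl b = k+1 then u a b else (\<Sum>c\<in>{z. cl z = cl b}. u a c) * of_real (2 / real (card {z. cl z = cl b})) - u a b)"
    unfolding mm_def ofr_def by (rule Qsum_right)
  have R: "mm (ofr (Qm cl k)) u a b = (if cl a = k+1 then u a b else of_real (2 / real (card {z. cl z = cl a})) * (\<Sum>c\<in>{z. cl z = cl a}. u c b) - u a b)"
    unfolding mm_def ofr_def by (rule Qsum_left)
  show "mm u (ofr (Qm cl k)) a b = mm (ofr (Qm cl k)) u a b"
  proof (cases "cl a = cl b")
    case True
    have "(\<Sum>c\<in>{z. cl z = cl b}. u a c) = 1"
      using sum_cell[of cl "cl b" "u a"] blk True rows by (metis)
    moreover have "(\<Sum>c\<in>{z. cl z = cl a}. u c b) = 1"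
      using sum_cell[of cl "cl a" "\<lambda>c. u c b"] blk True cols by (metis)
    ultimately show ?thesis using L R True by simp
  next
    case False
    have "(\<Sum>c\<in>{z. cl z = cl b}. u a c) = 0"
      using False blk by (intro sum.neutral) auto
    moreover have "(\<Sum>c\<in>{z. cl z = cl a}. u c b) = 0"
      using False blk by (intro sum.neutral) auto
    ultimately show ?thesis using L R False blk by simp
  qed
qed

lemma comb:
  fixes E :: "'v::finite \<Rightarrow> 'v \<Rightarrow> bool" and cl :: "'v \<Rightarrow> nat"
  defines "n \<equiv> \<lambda>j. real (card {z. cl z = j})"
    and "R \<equiv> \<lambda>x j. \<Sum>z\<in>{z. cl z = j}. Ar E x z"
  assumes sym: "\<And>x y. E x y \<Longrightarrow> E y x"
    and clr: "\<And>x. 1 \<le> cl x \<and> cl x \<le> k+1"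
    and gi: "\<And>x y j. cl x = cl y \<Longrightarrow> cl x \<le> k \<Longrightarrow> 1 \<le> j \<Longrightarrow> j \<le> k \<Longrightarrow> R x j = R y j"
    and gii: "\<And>v j. cl v = k+1 \<Longrightarrow> 1 \<le> j \<Longrightarrow> j \<le> k \<Longrightarrow> R v j = 0 \<or> 2 * R v j = n j \<or> R v j = n j"
  shows "mm (mm (Qm cl k) (Ar E)) (Qm cl k) x y =
    (if (cl x = k+1 \<and> cl y \<le> k \<and> 2 * R x (cl y) = n (cl y)) \<or> (cl y = k+1 \<and> cl x \<le> k \<and> 2 * R y (cl x) = n (cl x))
     then 1 - Ar E x y else Ar E x y)"
proof -
  have npos: "\<And>v. n (cl v) > 0"
  proof -
    fix v
    have "v \<in> {z. cl z = cl v}" by simp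
    then have "card {z. cl z = cl v} > 0" by (metis card_gt_0_iff empty_iff finite)
    then show "n (cl v) > 0" unfolding n_def by simp
  qed
  have Asym: "\<And>a b. Ar E a b = Ar E b a" unfolding Ar_def using sym by auto
  have A01: "\<And>a b. Ar E a b = 0 \<or> Ar E a b = 1" unfolding Ar_def by auto
  have R0: "\<And>v z. R v (cl z) = 0 \<Longrightarrow> Ar E v z = 0"
  proof -
    fix v z assume "R v (cl z) = 0"
    then have "\<forall>w\<in>{w. cl w = cl z}. Ar E v w = 0"
      unfolding R_def by (subst sum_nonneg_eq_0_iff[symmetric]) (auto simp: Ar_def)
    then show "Ar E v z = 0" by simp
  qed
  have Rn: "\<And>v z. R v (cl z) = n (cl z) \<Longrightarrow> Ar E v z = 1"
  proof -
    fix v z assume "R v (cl z) = n (cl z)"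
    then have "(\<Sum>w\<in>{w. cl w = cl z}. 1 - Ar E v w) = 0"
      unfolding R_def n_def by (simp add: sum_subtractf)
    then have "\<forall>w\<in>{w. cl w = cl z}. 1 - Ar E v w = 0"
      by (subst sum_nonneg_eq_0_iff[symmetric]) (auto simp: Ar_def)
    then show "Ar E v z = 1" by simp
  qed
  have Rswap: "\<And>i y. (\<Sum>c\<in>{z. cl z = i}. Ar E c y) = R y i"
    unfolding R_def using Asym by simp
  have Dbl: "\<And>i j. (\<Sum>c\<in>{z. cl z = i}. R c j) = (\<Sum>d\<in>{z. cl z = j}. R d i)"
    unfolding R_def by (subst sum.swap) (simp add: Asym)
  have g: "\<And>c. (\<Sum>d\<in>UNIV. Ar E c d * Qm cl k d y) =
      (if cl y = k+1 then Ar E c y else R c (cl y) * (2 / n (cl y)) - Ar E c y)"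
    using Qsum_right[where 'a=real and f="Ar E c" and cl=cl and k=k and x=y for c]
    unfolding R_def n_def by simp
  have T: "mm (mm (Qm cl k) (Ar E)) (Qm cl k) x y = (\<Sum>c\<in>UNIV. Qm cl k x c *
      (if cl y = k+1 then Ar E c y else R c (cl y) * (2 / n (cl y)) - Ar E c y))"
    unfolding mm_assoc by (simp add: mm_def g)
  also have "\<dots> = (if cl x = k+1 then (if cl y = k+1 then Ar E x y else R x (cl y) * (2 / n (cl y)) - Ar E x y)
      else 2 / n (cl x) * (\<Sum>c\<in>{z. cl z = cl x}. (if cl y = k+1 then Ar E c y else R c (cl y) * (2 / n (cl y)) - Ar E c y))
        - (if cl y = k+1 then Ar E x y else R x (cl y) * (2 / n (cl y)) - Ar E x y))"
    using Qsum_left[where 'a=real and cl=cl and k=k and x=x] unfolding n_def by simp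
  finally have T: "mm (mm (Qm cl k) (Ar E)) (Qm cl k) x y = \<dots>" .
  show ?thesis
  proof (cases "cl x = k+1")
    case xD: True
    show ?thesis
    proof (cases "cl y = k+1")
      case True
      then show ?thesis using T xD by simp
    next
      case False
      then have yC: "1 \<le> cl y" "cl y \<le> k" using clr[of y] by auto
      have np: "n (cl y) > 0" by (rule npos)
      from gii[OF xD yC] consider "R x (cl y) = 0" | "2 * R x (cl y) = n (cl y)" | "R x (cl y) = n (cl y)" by blast
      then show ?thesis
      proof cases
        case 1
        then show ?thesis using T xD False R0[OF 1] np by auto
      next
        case 2
        have "R x (cl y) * (2 / n (cl y)) = 1" using 2 np by (simp add: field_simps)
        then show ?thesis using T xD False yC 2 by simp
      next
        case 3
        then show ?thesis using T xD False Rn[OF 3] np by auto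
      qed
    qed
  next
    case xC: False
    then have xC': "1 \<le> cl x" "cl x \<le> k" using clr[of x] by auto
    have np: "n (cl x) > 0" by (rule npos)
    show ?thesis
    proof (cases "cl y = k+1")
      case yD: True
      have T2: "mm (mm (Qm cl k) (Ar E)) (Qm cl k) x y = 2 / n (cl x) * R y (cl x) - Ar E x y"
        using T xC yD Rswap by simp
      from gii[OF yD xC'] consider "R y (cl x) = 0" | "2 * R y (cl x) = n (cl x)" | "R y (cl x) = n (cl x)" by blast
      then show ?thesis
      proof cases
        case 1
        then show ?thesis using T2 xC yD R0[OF 1] np Asym[of x y] by auto
      next
        case 2
        have "2 / n (cl x) * R y (cl x) = 1" using 2 np by (simp add: field_simps)
        then show ?thesis using T2 xC yD xC' 2 by simp
      next
        case 3
        then show ?thesis using T2 xC yD Rn[OF 3] np Asym[of x y] by auto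
      qed
    next
      case yC: False
      then have yC': "1 \<le> cl y" "cl y \<le> k" using clr[of y] by auto
      have np2: "n (cl y) > 0" by (rule npos)
      have const: "\<And>c. c \<in> {z. cl z = cl x} \<Longrightarrow> R c (cl y) = R x (cl y)"
        using xC' yC' by (intro gi) auto
      have s1: "(\<Sum>c\<in>{z. cl z = cl x}. R c (cl y)) = n (cl x) * R x (cl y)"
      proof -
        have "(\<Sum>c\<in>{z. cl z = cl x}. R c (cl y)) = (\<Sum>c\<in>{z. cl z = cl x}. R x (cl y))"
          by (rule sum.cong[OF refl const])
        then show ?thesis unfolding n_def by simp
      qed
      have s2: "(\<Sum>d\<in>{z. cl z = cl y}. R d (cl x)) = n (cl y) * R y (cl x)"
      proof -
        have c2: "\<And>d. d \<in> {z. cl z = cl y} \<Longrightarrow> R d (cl x) = R y (cl x)"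
          using xC' yC' by (intro gi) auto
        have "(\<Sum>c\<in>{z. cl z = cl y}. R c (cl x)) = (\<Sum>c\<in>{z. cl z = cl y}. R y (cl x))"
          by (rule sum.cong[OF refl c2])
        then show ?thesis unfolding n_def by simp
      qed
      have key: "n (cl x) * R x (cl y) = n (cl y) * R y (cl x)"
        using s1 s2 Dbl by simp
      have sumg: "(\<Sum>c\<in>{z. cl z = cl x}. R c (cl y) * (2 / n (cl y)) - Ar E c y)
          = n (cl x) * R x (cl y) * (2 / n (cl y)) - R y (cl x)"
      proof -
        have "(\<Sum>c\<in>{z. cl z = cl x}. R c (cl y) * (2 / n (cl y)) - Ar E c y)
          = (\<Sum>c\<in>{z. cl z = cl x}. R c (cl y)) * (2 / n (cl y)) - (\<Sum>c\<in>{z. cl z = cl x}. Ar E c y)"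
          by (simp only: sum_subtractf sum_distrib_right)
        then show ?thesis by (simp only: s1 Rswap)
      qed
      have T3: "mm (mm (Qm cl k) (Ar E)) (Qm cl k) x y =
          2 / n (cl x) * (n (cl x) * R x (cl y) * (2 / n (cl y)) - R y (cl x)) - (R x (cl y) * (2 / n (cl y)) - Ar E x y)"
        using T xC yC sumg by simp
      also have "\<dots> = Ar E x y"
      proof -
        have e1: "R x (cl y) / n (cl y) = R y (cl x) / n (cl x)"
          using key np np2 by (simp add: divide_eq_eq eq_divide_eq) (metis mult.commute)
        have e2: "2 / n (cl x) * (n (cl x) * R x (cl y) * (2 / n (cl y)) - R y (cl x))
            = 4 * (R x (cl y) / n (cl y)) - 2 * (R y (cl x) / n (cl x))"
          using np by (simp add: right_diff_distrib)
        have e3: "R x (cl y) * (2 / n (cl y)) = 2 * (R x (cl y) / n (cl y))" by simp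
        show ?thesis unfolding e2 e3 e1 by simp
      qed
      finally show ?thesis using xC yC by simp
    qed
  qed
qed

lemma R_card:
  fixes cl :: "'v::finite \<Rightarrow> nat"
  shows   "(\<Sum>z\<in>{z. cl z = j}. Ar E x z) = real (card {z. cl z = j \<and> E x z})"
proof -
  have "(\<Sum>z\<in>{z. cl z = j}. Ar E x z) = (\<Sum>z\<in>{z. cl z = j \<and> E x z}. 1)"
    unfolding Ar_def by (rule sum.mono_neutral_cong_right) auto
  then show ?thesis by simp
qed

lemma bridge:
  fixes E :: "'v::finite \<Rightarrow> 'v \<Rightarrow> bool" and cl :: "'v \<Rightarrow> nat"
  assumes Cchar: "\<And>i. i\<in>{1..k+1} \<Longrightarrow> C i = {x. cl x = i}"
    and clr: "\<And>x. 1 \<le> cl x \<and> cl x \<le> k+1" and D: "D = C (k+1)"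
    and sg: "simple_graph E" and gm: "gm_cond E C k D"
  shows "Ar (gm_switch E C k D) = mm (mm (Qm cl k) (Ar E)) (Qm cl k)"
proof (intro ext)
  fix x y
  define n where "n \<equiv> \<lambda>j. real (card {z. cl z = j})"
  define R where "R \<equiv> \<lambda>x j. \<Sum>z\<in>{z. cl z = j}. Ar E x z"
  have sym: "\<And>x y. E x y \<Longrightarrow> E y x" using sg unfolding simple_graph_def by auto
  have Rc: "\<And>x j. j \<in> {1..k+1} \<Longrightarrow> R x j = real (card {z\<in>C j. E x z})"
    unfolding R_def R_card using Cchar by simp
  have nc: "\<And>j. j \<in> {1..k+1} \<Longrightarrow> n j = real (card (C j))"
    unfolding n_def using Cchar by simp
  have DD: "\<And>v. v \<in> D \<longleftrightarrow> cl v = k+1" using D Cchar[of "k+1"] by simp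
  have g1: "\<forall>i\<in>{1..k}. \<forall>j\<in>{1..k}. \<forall>x\<in>C i. \<forall>y\<in>C i. card {z\<in>C j. E x z} = card {z\<in>C j. E y z}"
    using gm unfolding gm_cond_def by blast
  have g2: "\<forall>v\<in>D. \<forall>i\<in>{1..k}. card {z\<in>C i. E v z} = 0 \<or> 2 * card {z\<in>C i. E v z} = card (C i)
        \<or> card {z\<in>C i. E v z} = card (C i)"
    using gm unfolding gm_cond_def by blast
  have gi: "\<And>x y j. cl x = cl y \<Longrightarrow> cl x \<le> k \<Longrightarrow> 1 \<le> j \<Longrightarrow> j \<le> k \<Longrightarrow> R x j = R y j"
  proof -
    fix x y j assume a: "cl x = cl y" "cl x \<le> k" "1 \<le> j" "j \<le> k"
    have "x \<in> C (cl x)" "y \<in> C (cl x)" "cl x \<in> {1..k}" using a clr[of x] Cchar[of "cl x"] by auto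
    then have "card {z\<in>C j. E x z} = card {z\<in>C j. E y z}"
      using g1[rule_format, of "cl x" j x y] a by simp
    then show "R x j = R y j" using Rc a by simp
  qed
  have gii: "\<And>v j. cl v = k+1 \<Longrightarrow> 1 \<le> j \<Longrightarrow> j \<le> k \<Longrightarrow> R v j = 0 \<or> 2 * R v j = n j \<or> R v j = n j"
  proof -
    fix v j assume a: "cl v = k+1" "1 \<le> j" "j \<le> k"
    have "v \<in> D" using a DD by simp
    then have "card {z\<in>C j. E v z} = 0 \<or> 2 * card {z\<in>C j. E v z} = card (C j) \<or> card {z\<in>C j. E v z} = card (C j)"
      using g2[rule_format, of v j] a by simp
    then show "R v j = 0 \<or> 2 * R v j = n j \<or> R v j = n j"
    proof -
      have "R v j = real (card {z\<in>C j. E v z})" "n j = real (card (C j))" using Rc[of j v] nc[of j] a by auto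
      moreover have "\<And>p q::nat. (2 * real p = real q) \<longleftrightarrow> 2 * p = q" by linarith
      ultimately show ?thesis using \<open>card {z\<in>C j. E v z} = 0 \<or> _\<close> by auto
    qed
  qed
  have flip: "\<And>x y. gm_flip E C k D x y \<longleftrightarrow> (cl x = k+1 \<and> cl y \<le> k \<and> 2 * R x (cl y) = n (cl y))"
  proof -
    fix x y
    have "gm_flip E C k D x y \<longleftrightarrow> (cl x = k+1 \<and> (\<exists>i\<in>{1..k}. cl y = i \<and> 2 * card {z\<in>C i. E x z} = card (C i)))"
      unfolding gm_flip_def DD using Cchar by auto
    also have "\<dots> \<longleftrightarrow> (cl x = k+1 \<and> cl y \<le> k \<and> 2 * card {z\<in>C (cl y). E x z} = card (C (cl y)))"
      using clr[of y] by auto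
    also have "\<dots> \<longleftrightarrow> (cl x = k+1 \<and> cl y \<le> k \<and> 2 * R x (cl y) = n (cl y))"
    proof -
      have "cl y \<le> k \<Longrightarrow> (2 * card {z\<in>C (cl y). E x z} = card (C (cl y))) \<longleftrightarrow> (2 * R x (cl y) = n (cl y))"
      proof -
        assume "cl y \<le> k"
        then have "R x (cl y) = real (card {z\<in>C (cl y). E x z})" "n (cl y) = real (card (C (cl y)))"
          using Rc[of "cl y" x] nc[of "cl y"] clr[of y] by auto
        moreover have "\<And>p q::nat. (2 * real p = real q) \<longleftrightarrow> 2 * p = q" by linarith
        ultimately show ?thesis by simp
      qed
      then show ?thesis by auto
    qed
    finally show "gm_flip E C k D x y \<longleftrightarrow> (cl x = k+1 \<and> cl y \<le> k \<and> 2 * R x (cl y) = n (cl y))" .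
  qed
  have "mm (mm (Qm cl k) (Ar E)) (Qm cl k) x y =
    (if (cl x = k+1 \<and> cl y \<le> k \<and> 2 * R x (cl y) = n (cl y)) \<or> (cl y = k+1 \<and> cl x \<le> k \<and> 2 * R y (cl x) = n (cl x))
     then 1 - Ar E x y else Ar E x y)"
    unfolding n_def R_def by (rule comb[OF sym clr gi[unfolded R_def] gii[unfolded R_def n_def]])
  then show "Ar (gm_switch E C k D) x y = mm (mm (Qm cl k) (Ar E)) (Qm cl k) x y"
    unfolding gm_switch_def flip by (auto simp: Ar_def)
qed

lemma adjm_comm: "adjm E x y * z = z * adjm E x y"
  by (simp add: adjm_def)

theorem theorem4p3:
  fixes E1 E2 :: "'v::finite \<Rightarrow> 'v \<Rightarrow> bool"
    and Vp :: "nat \<Rightarrow> 'v set" and m k :: nat and S :: "nat \<Rightarrow> nat set"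
    and u :: "'v \<Rightarrow> 'v \<Rightarrow> 'a::cstar_algebra"
    and C :: "nat \<Rightarrow> 'v set" and D :: "'v set"
  assumes "simple_graph E1" and "simple_graph E2"
    and "is_partition_idx Vp {1..m} UNIV"
    and "quantum_perm u"
    and "\<forall>a b. (\<Sum>c\<in>UNIV. u a c * adjm E1 c b) = (\<Sum>c\<in>UNIV. adjm E2 a c * u c b)"
    and "\<forall>s\<in>{1..m}. \<forall>t\<in>{1..m}. \<forall>a\<in>Vp s. \<forall>b\<in>Vp t. s \<noteq> t \<longrightarrow> u a b = 0"
    and "is_partition_idx S {1..k+1} {1..m}"
    and "C = (\<lambda>i. \<Union>s\<in>S i. Vp s)"
    and "D = (\<Union>s\<in>S (k+1). Vp s)"
    and "gm_cond E1 C k D" and "gm_cond E2 C k D"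
  shows "quantum_iso_over TYPE('a) (gm_switch E1 C k D) (gm_switch E2 C k D)"
proof -
  note sg1 = assms(1) and sg2 = assms(2) and qp = assms(4) and inter = assms(5) and blk0 = assms(6)
    and Cdef = assms(8) and Ddef = assms(9) and gm1 = assms(10) and gm2 = assms(11)
  have Vcov: "\<And>x. \<exists>s\<in>{1..m}. x \<in> Vp s" using assms(3) unfolding is_partition_idx_def by blast
  have Vdis: "\<And>s t. s\<in>{1..m} \<Longrightarrow> t\<in>{1..m} \<Longrightarrow> s \<noteq> t \<Longrightarrow> Vp s \<inter> Vp t = {}"
    using assms(3) unfolding is_partition_idx_def by blast
  have Scov: "(\<Union>i\<in>{1..k+1}. S i) = {1..m}" using assms(7) unfolding is_partition_idx_def by blast
  have Sdis: "\<And>i j. i\<in>{1..k+1} \<Longrightarrow> j\<in>{1..k+1} \<Longrightarrow> i \<noteq> j \<Longrightarrow> S i \<inter> S j = {}"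
    using assms(7) unfolding is_partition_idx_def by blast
  have ex: "\<And>x. \<exists>i. i\<in>{1..k+1} \<and> x \<in> C i"
  proof -
    fix x
    obtain s where s: "s\<in>{1..m}" "x \<in> Vp s" using Vcov by blast
    then obtain i where "i\<in>{1..k+1}" "s \<in> S i" using Scov by blast
    then show "\<exists>i. i\<in>{1..k+1} \<and> x \<in> C i" using s Cdef by blast
  qed
  have uq: "\<And>x i j. i\<in>{1..k+1} \<Longrightarrow> j\<in>{1..k+1} \<Longrightarrow> x \<in> C i \<Longrightarrow> x \<in> C j \<Longrightarrow> i = j"
  proof (rule ccontr)
    fix x i j assume a: "i\<in>{1..k+1}" "j\<in>{1..k+1}" "x \<in> C i" "x \<in> C j" "i \<noteq> j"
    obtain s where s: "s \<in> S i" "x \<in> Vp s" using a Cdef by blast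
    obtain t where t: "t \<in> S j" "x \<in> Vp t" using a Cdef by blast
    have st: "s \<in> {1..m}" "t \<in> {1..m}" using s t a Scov by blast+
    have "s = t" using Vdis[OF st] s t by blast
    then show False using Sdis[OF a(1,2,5)] s t by blast
  qed
  define cl where "cl x = (THE i. i\<in>{1..k+1} \<and> x \<in> C i)" for x
  have clp: "\<And>x. cl x \<in> {1..k+1} \<and> x \<in> C (cl x)"
  proof -
    fix x
    have "\<exists>!i. i\<in>{1..k+1} \<and> x \<in> C i" using ex uq by blast
    then show "cl x \<in> {1..k+1} \<and> x \<in> C (cl x)" unfolding cl_def by (rule theI')
  qed
  have clr: "\<And>x. 1 \<le> cl x \<and> cl x \<le> k+1" using clp by auto
  have Cchar: "\<And>i. i\<in>{1..k+1} \<Longrightarrow> C i = {x. cl x = i}"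
    using clp uq by blast
  have DC: "D = C (k+1)" using Ddef Cdef by simp
  have blk: "\<And>a b. cl a \<noteq> cl b \<Longrightarrow> u a b = 0"
  proof -
    fix a b assume ne: "cl a \<noteq> cl b"
    obtain s where s: "s \<in> S (cl a)" "a \<in> Vp s" using clp[of a] Cdef by blast
    obtain t where t: "t \<in> S (cl b)" "b \<in> Vp t" using clp[of b] Cdef by blast
    have st: "s \<in> {1..m}" "t \<in> {1..m}" using s t clp Scov by blast+
    have "s \<noteq> t" using Sdis[of "cl a" "cl b"] clp ne s t by blast
    then show "u a b = 0" using blk0 st s t by blast
  qed
  have rows: "\<And>i. (\<Sum>c\<in>UNIV. u i c) = 1" and cols: "\<And>i. (\<Sum>c\<in>UNIV. u c i) = 1"
    and proj: "\<And>i j. u i j = cstar (u i j) \<and> u i j * u i j = u i j"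
    using qp unfolding quantum_perm_def by auto
  let ?q = "ofr (Qm cl k) :: 'v \<Rightarrow> 'v \<Rightarrow> 'a"
  have comm: "mm u ?q = mm ?q u" by (rule Q_comm[OF rows cols blk])
  have H: "mm u (adjm E1) = mm (adjm E2) u"
    using inter unfolding mm_def by (intro ext) simp
  have S1: "adjm (gm_switch E1 C k D) = mm (mm ?q (adjm E1)) ?q"
    by (simp only: adjm_ofr bridge[OF Cchar clr DC sg1 gm1] mm_ofr)
  have S2: "adjm (gm_switch E2 C k D) = mm (mm ?q (adjm E2)) ?q"
    by (simp only: adjm_ofr bridge[OF Cchar clr DC sg2 gm2] mm_ofr)
  have main: "mm u (adjm (gm_switch E1 C k D)) = mm (adjm (gm_switch E2 C k D)) u"
  proof -
    have "mm u (adjm (gm_switch E1 C k D)) = mm (mm (mm u ?q) (adjm E1)) ?q"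
      unfolding S1 mm_assoc ..
    also have "\<dots> = mm (mm ?q (mm u (adjm E1))) ?q" unfolding comm mm_assoc ..
    also have "\<dots> = mm (mm (mm ?q (adjm E2)) u) ?q" unfolding H mm_assoc ..
    also have "\<dots> = mm (mm ?q (adjm E2)) (mm ?q u)" unfolding comm[symmetric] mm_assoc ..
    also have "\<dots> = mm (adjm (gm_switch E2 C k D)) u" unfolding S2 mm_assoc ..
    finally show ?thesis .
  qed
  have swsym: "\<And>(E :: 'v \<Rightarrow> 'v \<Rightarrow> bool) x y. simple_graph E \<Longrightarrow> adjm (gm_switch E C k D) x y = (adjm (gm_switch E C k D) y x :: 'a)"
  proof -
    fix E :: "'v \<Rightarrow> 'v \<Rightarrow> bool" and x y assume "simple_graph E"
    then have e: "E x y = E y x" unfolding simple_graph_def by blast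
    have "gm_switch E C k D x y = gm_switch E C k D y x"
      unfolding gm_switch_def e by (simp add: disj_commute)
    then show "adjm (gm_switch E C k D) x y = (adjm (gm_switch E C k D) y x :: 'a)"
      unfolding adjm_def by simp
  qed
  define w where "w a b = u b a" for a b
  have "quantum_perm w" using rows cols proj unfolding quantum_perm_def w_def by auto
  moreover have "intertwines (gm_switch E1 C k D) (gm_switch E2 C k D) w"
    unfolding intertwines_def
  proof (intro allI)
    fix a b
    have "(\<Sum>c\<in>UNIV. adjm (gm_switch E1 C k D) a c * w c b) = (\<Sum>c\<in>UNIV. u b c * adjm (gm_switch E1 C k D) c a)"
      unfolding w_def using swsym[OF sg1] by (simp add: adjm_comm)
    also have "\<dots> = mm u (adjm (gm_switch E1 C k D)) b a" by (simp add: mm_def)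
    also have "\<dots> = mm (adjm (gm_switch E2 C k D)) u b a" by (simp add: main)
    also have "\<dots> = (\<Sum>c\<in>UNIV. w a c * adjm (gm_switch E2 C k D) c b)"
      unfolding w_def mm_def using swsym[OF sg2] by (simp add: adjm_comm)
    finally show "(\<Sum>c\<in>UNIV. adjm (gm_switch E1 C k D) a c * w c b) = (\<Sum>c\<in>UNIV. w a c * adjm (gm_switch E2 C k D) c b)" .
  qed
  ultimately show ?thesis unfolding quantum_iso_over_def by blast
qed

end
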